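(* Let $X$ be well ordered, $\Omega=\{P\}$, $\lambda\in K$, $\mathfrak{S}(X)$ ordered by order $(1)$, and $S=\{P(x)P(y)-P(P(x)y)-P(xP(y))-\lambda P(xy)\mid x,y\in\mathfrak{S}(X)\}$. Then $Irr(S)=\Phi(X)$, and $\Phi(X)$ is a $K$-basis of $K\langle X;P|S\rangle=K\langle X;P\rangle/Id(S)$.
   Context: $K$ is a commutative ring with unit. $S(Y)$ denotes the free semigroup on $Y$. $\mathfrak{S}(X)$ is the set of $\Omega$-words for $\Omega=\{P\}$ unary: $\mathfrak{S}_0=S(X)$, $\mathfrak{S}_n=S(X\cup\{P(u)\mid u\in\mathfrak{S}_{n-1}\})$, $\mathfrak{S}(X)=\bigcup_n\mathfrak{S}_n$. $K\langle X;P\rangle$ is the free $K$-module on $\mathfrak{S}(X)$ with concatenation product and $P$ extended linearly. $\mathfrak{S}^\star(X)$ is the set of $\Omega$-words on $X\cup\{\star\}$ with exactly one $\star$, $u|_s$ the substitution of $s$ for $\star$. $Id(S)$ is the $K$-span of all $u|_s$, $u\in\mathfrak{S}^\star(X)$, $s\in S$. $\bar f$ is the leading word of $f$ w.r.t. the given order, and $Irr(S)=\{w\in\mathfrak{S}(X)\mid w\ne u|_{\bar s}\text{ for all }u\in\mathfrak{S}^\star(X),s\in S\}$. Order (1): with $X^*$ ordered deg-lex, write $u=u_0P(x_1)u_1\cdots P(x_t)u_t$ uniquely ($u_i\in X^*$, $x_k\in\mathfrak{S}(X)$), $wt(u)=(t,P,x_1,\dots,P,x_t,u_0,\dots,u_t)$,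 and $u>v$ iff $wt(u)>wt(v)$ lexicographically (recursively on depth). Rota–Baxter words: for $Y,Z\subseteq\mathfrak{S}(X)$ let $YP(Z)=\{yP(z)\}$ etc. and $\Lambda^P_X(Y,Z)=\bigcup_{r\ge1}(YP(Z))^r\cup\bigcup_{r\ge0}(YP(Z))^rY\cup\bigcup_{r\ge1}(P(Z)Y)^r\cup\bigcup_{r\ge0}(P(Z)Y)^rP(Z)$. Put $\Phi_0=S(X)$, $\Phi_n=\Lambda^P_X(\Phi_0,\Phi_{n-1})$ for $n>0$, and $\Phi(X)=\bigcup_{n\ge0}\Phi_n$. *)

theory Defs
  imports Complex_Main "HOL-Library.Poly_Mapping"
begin

text \<open>An atom is either a letter of the alphabet or P applied to a word;
  a word is a (nonempty, see wf) list of atoms; concatenation is list append.\<close>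
datatype 'x atom = Let 'x | Pw "'x atom list"

fun wfa :: "'x atom \<Rightarrow> bool" and wfl :: "'x atom list \<Rightarrow> bool" where
  "wfa (Let x) = True"
| "wfa (Pw u) = (u \<noteq> [] \<and> wfl u)"
| "wfl [] = True"
| "wfl (a # u) = (wfa a \<and> wfl u)"

definition wfw :: "'x atom list \<Rightarrow> bool" where
  "wfw u \<longleftrightarrow> u \<noteq> [] \<and> wfl u"

text \<open>The set of Omega-words on X (X = the universe of type 'x).\<close>
definition Words :: "'x atom list set" where
  "Words = {u. wfw u}"

definition Pword :: "'x atom list \<Rightarrow> 'x atom list" where
  "Pword u = [Pw u]"

fun nstar_a :: "'x option atom \<Rightarrow> nat" and nstar_l :: "'x option atom list \<Rightarrow> nat" where
  "nstar_a (Let None) = 1"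
| "nstar_a (Let (Some x)) = 0"
| "nstar_a (Pw u) = nstar_l u"
| "nstar_l [] = 0"
| "nstar_l (a # u) = nstar_a a + nstar_l u"

definition StarWords :: "'x option atom list set" where
  "StarWords = {u. wfw u \<and> nstar_l u = 1}"

fun sub_a :: "'x atom list \<Rightarrow> 'x option atom \<Rightarrow> 'x atom list"
and sub_w :: "'x atom list \<Rightarrow> 'x option atom list \<Rightarrow> 'x atom list" where
  "sub_a s (Let None) = s"
| "sub_a s (Let (Some x)) = [Let x]"
| "sub_a s (Pw u) = [Pw (sub_w s u)]"
| "sub_w s [] = []"
| "sub_w s (a # u) = sub_a s a @ sub_w s u"

text \<open>u|_s for a word s is sub_w s u.\<close>

type_synonym ('x, 'k) opoly = "'x atom list \<Rightarrow>\<^sub>0 'k"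

definition KXP :: "('x, 'k::comm_ring_1) opoly set" where
  "KXP = {p. Poly_Mapping.keys p \<subseteq> Words}"

definition scal :: "'k::comm_ring_1 \<Rightarrow> ('x, 'k) opoly \<Rightarrow> ('x, 'k) opoly" where
  "scal c p = Poly_Mapping.map (\<lambda>a. c * a) p"

definition lin :: "('x atom list \<Rightarrow> 'y atom list) \<Rightarrow> ('x, 'k::comm_ring_1) opoly \<Rightarrow> ('y, 'k) opoly" where
  "lin f p = (\<Sum>w\<in>Poly_Mapping.keys p. Poly_Mapping.single (f w) (Poly_Mapping.lookup p w))"

definition Idl :: "('x, 'k::comm_ring_1) opoly set \<Rightarrow> ('x, 'k) opoly set" where
  "Idl S = module.span scal {lin (\<lambda>w. sub_w w u) s | u s. u \<in> StarWords \<and> s \<in> S}"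

text \<open>Decomposition u = u0 P(x1) u1 ... P(xt) ut: returns ([u0,...,ut],[x1,...,xt]).\<close>
fun dec :: "'x atom list \<Rightarrow> 'x list list \<times> 'x atom list list" where
  "dec [] = ([[]], [])"
| "dec (Let a # w) = (case dec w of (ss, xs) \<Rightarrow> ((a # hd ss) # tl ss, xs))"
| "dec (Pw v # w) = (case dec w of (ss, xs) \<Rightarrow> ([] # ss, v # xs))"

definition segs :: "'x atom list \<Rightarrow> 'x list list" where "segs u = fst (dec u)"
definition args :: "'x atom list \<Rightarrow> 'x atom list list" where "args u = snd (dec u)"

definition deglex_less :: "'x::wellorder list \<Rightarrow> 'x list \<Rightarrow> bool" where
  "deglex_less a b \<longleftrightarrow> length a < length b \<or>
     (length a = length b \<and> (a, b) \<in> lexord {(x, y). x < y})"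

text \<open>u < v iff wt(u) < wt(v) lexicographically, where
  wt(u) = (t, P, x1, ..., P, xt, u0, ..., ut), the xi compared recursively.\<close>
inductive wlt :: "'x::wellorder atom list \<Rightarrow> 'x atom list \<Rightarrow> bool" where
  by_t: "length (args u) < length (args v) \<Longrightarrow> wlt u v"
| by_args: "\<lbrakk>length (args u) = length (args v); i < length (args u);
     take i (args u) = take i (args v); wlt (args u ! i) (args v ! i)\<rbrakk> \<Longrightarrow> wlt u v"
| by_segs: "\<lbrakk>args u = args v; i < length (segs u);
     take i (segs u) = take i (segs v); deglex_less (segs u ! i) (segs v ! i)\<rbrakk> \<Longrightarrow> wlt u v"

definition lead :: "('x::wellorder, 'k::comm_ring_1) opoly \<Rightarrow> 'x atom list" where
  "lead f = (THE w. w \<in> Poly_Mapping.keys f \<and> (\<forall>v\<in>Poly_Mapping.keys f. v \<noteq> w \<longrightarrow> wlt v w))"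

definition Irr :: "('x::wellorder, 'k::comm_ring_1) opoly set \<Rightarrow> 'x atom list set" where
  "Irr S = {w \<in> Words. \<forall>u\<in>StarWords. \<forall>s\<in>S. w \<noteq> sub_w (lead s) u}"

definition RB :: "'k::comm_ring_1 \<Rightarrow> 'x atom list \<Rightarrow> 'x atom list \<Rightarrow> ('x, 'k) opoly" where
  "RB lam x y =
     Poly_Mapping.single (Pword x @ Pword y) 1
     - Poly_Mapping.single (Pword (Pword x @ y)) 1
     - Poly_Mapping.single (Pword (x @ Pword y)) 1
     - Poly_Mapping.single (Pword (x @ y)) lam"

definition RBS :: "'k::comm_ring_1 \<Rightarrow> ('x, 'k) opoly set" where
  "RBS lam = {RB lam x y | x y. x \<in> Words \<and> y \<in> Words}"

definition YPZ :: "'x atom list set \<Rightarrow> 'x atom list set \<Rightarrow> 'x atom list set" where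
  "YPZ Y Z = {y @ Pword z | y z. y \<in> Y \<and> z \<in> Z}"

definition PZY :: "'x atom list set \<Rightarrow> 'x atom list set \<Rightarrow> 'x atom list set" where
  "PZY Y Z = {Pword z @ y | y z. y \<in> Y \<and> z \<in> Z}"

text \<open>A^r in the free semigroup (A^0 = {empty word}, used only as a prefix).\<close>
definition spow :: "'a list set \<Rightarrow> nat \<Rightarrow> 'a list set" where
  "spow A r = {concat ws | ws. length ws = r \<and> set ws \<subseteq> A}"

definition Lam :: "'x atom list set \<Rightarrow> 'x atom list set \<Rightarrow> 'x atom list set" where
  "Lam Y Z =
     (\<Union>r\<in>{1..}. spow (YPZ Y Z) r)
   \<union> (\<Union>r. {a @ y | a y. a \<in> spow (YPZ Y Z) r \<and> y \<in> Y})
   \<union> (\<Union>r\<in>{1..}. spow (PZY Y Z) r)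
   \<union> (\<Union>r. {a @ Pword z | a z. a \<in> spow (PZY Y Z) r \<and> z \<in> Z})"

definition SX :: "'x atom list set" where
  "SX = {map Let xs | xs. xs \<noteq> []}"

primrec PhiN :: "nat \<Rightarrow> 'x atom list set" where
  "PhiN 0 = SX"
| "PhiN (Suc n) = Lam SX (PhiN n)"

definition Phi :: "'x atom list set" where
  "Phi = (\<Union>n. PhiN n)"

end

theory Submission
  imports Defs
begin


lemma lookup_scal[simp]: "Poly_Mapping.lookup (scal c p) k = c * Poly_Mapping.lookup p k"
  by (simp add: scal_def Poly_Mapping.map.rep_eq when_def)

lemma scal_add: "scal c (p + q) = scal c p + scal c q"
  by (rule poly_mapping_eqI) (simp add: lookup_add algebra_simps)
lemma scal_add2: "scal (c + d) p = scal c p + scal d p"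
  by (rule poly_mapping_eqI) (simp add: lookup_add algebra_simps)
lemma scal_scal[simp]: "scal c (scal d p) = scal (c * d) p"
  by (rule poly_mapping_eqI) (simp add: algebra_simps)
lemma scal_one[simp]: "scal 1 p = p"
  by (rule poly_mapping_eqI) simp
lemma scal_zero[simp]: "scal c 0 = 0"
  by (rule poly_mapping_eqI) simp
lemma scal_zero2[simp]: "scal 0 p = 0"
  by (rule poly_mapping_eqI) simp
lemma scal_single[simp]: "scal c (Poly_Mapping.single k d) = Poly_Mapping.single k (c * d)"
  by (rule poly_mapping_eqI) (simp add: lookup_single when_def)
lemma scal_minus: "scal c (p - q) = scal c p - scal c q"
  by (rule poly_mapping_eqI) (simp add: lookup_minus algebra_simps)
lemma scal_uminus: "scal c (- p) = - scal c p"
  by (rule poly_mapping_eqI) (simp add: algebra_simps)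
lemma scal_sum: "scal c (sum f A) = (\<Sum>a\<in>A. scal c (f a))"
  by (induction A rule: infinite_finite_induct) (auto simp: scal_add)

interpretation SC: module scal
  by unfold_locales (simp_all add: scal_add scal_add2)

definition ext :: "('y atom list \<Rightarrow> ('x, 'k::comm_ring_1) opoly) \<Rightarrow> ('y, 'k) opoly \<Rightarrow> ('x, 'k) opoly" where
  "ext F p = (\<Sum>w\<in>Poly_Mapping.keys p. scal (Poly_Mapping.lookup p w) (F w))"

lemma ext_superset:
  assumes "finite A" "Poly_Mapping.keys p \<subseteq> A"
  shows "ext F p = (\<Sum>w\<in>A. scal (Poly_Mapping.lookup p w) (F w))"
  unfolding ext_def
  by (rule sum.mono_neutral_left) (use assms in \<open>auto simp: in_keys_iff\<close>)

lemma ext_add: "ext F (p + q) = ext F p + ext F q"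
proof -
  let ?A = "Poly_Mapping.keys p \<union> Poly_Mapping.keys q"
  have "ext F (p + q) = (\<Sum>w\<in>?A. scal (Poly_Mapping.lookup (p+q) w) (F w))"
    by (rule ext_superset) (auto simp: keys_add)
  also have "\<dots> = (\<Sum>w\<in>?A. scal (Poly_Mapping.lookup p w) (F w)) + (\<Sum>w\<in>?A. scal (Poly_Mapping.lookup q w) (F w))"
    by (simp add: lookup_add scal_add2 sum.distrib)
  also have "\<dots> = ext F p + ext F q"
    by (simp add: ext_superset[of ?A p] ext_superset[of ?A q])
  finally show ?thesis .
qed

lemma ext_zero[simp]: "ext F 0 = 0"
  by (simp add: ext_def)

lemma ext_single[simp]: "ext F (Poly_Mapping.single k c) = scal c (F k)"
  by (cases "c = 0") (simp_all add: ext_def)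

lemma ext_scal: "ext F (scal c p) = scal c (ext F p)"
proof -
  have "ext F (scal c p) = (\<Sum>w\<in>Poly_Mapping.keys p. scal (Poly_Mapping.lookup (scal c p) w) (F w))"
    by (rule ext_superset) (auto simp: in_keys_iff)
  then show ?thesis by (simp add: ext_def scal_sum)
qed

lemma ext_uminus: "ext F (- p) = - ext F p"
proof -
  have "ext F p + ext F (- p) = 0" using ext_add[of F p "-p"] by simp
  then show ?thesis by (metis minus_unique)
qed

lemma ext_diff: "ext F (p - q) = ext F p - ext F q"
  using ext_add[of F p "-q"] by (simp add: ext_uminus)

lemma ext_sum: "ext F (sum f A) = (\<Sum>a\<in>A. ext F (f a))"
  by (induction A rule: infinite_finite_induct) (auto simp: ext_add)

lemma poly_expansion: "p = (\<Sum>k\<in>Poly_Mapping.keys p. Poly_Mapping.single k (Poly_Mapping.lookup p k))"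
proof (rule poly_mapping_eqI)
  fix j
  have "finite I \<Longrightarrow> Poly_Mapping.lookup (\<Sum>k\<in>I. Poly_Mapping.single k (Poly_Mapping.lookup p k)) j
      = (if j \<in> I then Poly_Mapping.lookup p j else 0)" for I
    by (induction I rule: finite_induct) (auto simp: lookup_single lookup_add when_def)
  then show "Poly_Mapping.lookup p j = Poly_Mapping.lookup (\<Sum>k\<in>Poly_Mapping.keys p. Poly_Mapping.single k (Poly_Mapping.lookup p k)) j"
    by (auto simp: in_keys_iff)
qed

lemma poly_induct[case_names zero single add]:
  fixes p :: "'a \<Rightarrow>\<^sub>0 'b::comm_monoid_add"
  assumes "P 0" "\<And>k c. P (Poly_Mapping.single k c)" "\<And>a b. P a \<Longrightarrow> P b \<Longrightarrow> P (a + b)"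
  shows "P p"
proof -
  have "finite I \<Longrightarrow> P (\<Sum>k\<in>I. Poly_Mapping.single k (Poly_Mapping.lookup p k))" for I
    by (induction I rule: finite_induct) (auto intro: assms)
  then show ?thesis by (subst poly_expansion) simp
qed

lemma ext_fadd: "ext (\<lambda>w. F w + G w) p = ext F p + ext G p"
  by (induction p rule: poly_induct) (simp_all add: ext_add scal_add)
lemma ext_fdiff: "ext (\<lambda>w. F w - G w) p = ext F p - ext G p"
  by (induction p rule: poly_induct) (simp_all add: ext_add scal_minus)
lemma ext_fscal: "ext (\<lambda>w. scal c (F w)) p = scal c (ext F p)"
  by (induction p rule: poly_induct) (simp_all add: ext_add scal_add mult.commute)
lemma ext_fzero[simp]: "ext (\<lambda>w. 0) p = 0"
  by (induction p rule: poly_induct) (simp_all add: ext_add)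
lemma ext_cong: "(\<And>w. w \<in> Poly_Mapping.keys p \<Longrightarrow> F w = G w) \<Longrightarrow> ext F p = ext G p"
  by (simp add: ext_def)
lemma ext_comp: "ext G (ext F p) = ext (\<lambda>w. ext G (F w)) p"
  by (induction p rule: poly_induct) (simp_all add: ext_add ext_scal)
lemma ext_swap: "ext (\<lambda>w. ext (G w) t) s = ext (\<lambda>k. ext (\<lambda>w. G w k) s) t"
  by (induction t rule: poly_induct) (simp_all add: ext_add ext_fadd ext_fscal)
lemma ext_id[simp]: "ext (\<lambda>w. Poly_Mapping.single w 1) p = p"
  by (induction p rule: poly_induct) (simp_all add: ext_add)
lemma keys_ext: "Poly_Mapping.keys (ext F p) \<subseteq> (\<Union>w\<in>Poly_Mapping.keys p. Poly_Mapping.keys (F w))"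
proof -
  have "Poly_Mapping.keys (scal c q) \<subseteq> Poly_Mapping.keys q" for c and q :: "('x, 'k::comm_ring_1) opoly"
    by (auto simp: in_keys_iff)
  then show ?thesis unfolding ext_def using keys_sum by fastforce
qed

lemma lin_ext: "lin f p = ext (\<lambda>w. Poly_Mapping.single (f w) 1) p"
  by (simp add: lin_def ext_def)

lemma span_ext:
  assumes "\<And>w. w \<in> Poly_Mapping.keys p \<Longrightarrow> F w \<in> SC.span S"
  shows "ext F p \<in> SC.span S"
  unfolding ext_def using assms by (intro SC.span_sum SC.span_scale) auto



definition lc :: "'x atom list \<Rightarrow> ('x, 'k::comm_ring_1) opoly \<Rightarrow> ('x, 'k) opoly" where
  "lc L p = ext (\<lambda>w. Poly_Mapping.single (L @ w) 1) p"
definition rc :: "'x atom list \<Rightarrow> ('x, 'k::comm_ring_1) opoly \<Rightarrow> ('x, 'k) opoly" where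
  "rc R p = ext (\<lambda>w. Poly_Mapping.single (w @ R) 1) p"
definition Pp :: "('x, 'k::comm_ring_1) opoly \<Rightarrow> ('x, 'k) opoly" where
  "Pp p = ext (\<lambda>w. Poly_Mapping.single [Pw w] 1) p"

function PF :: "'k::comm_ring_1 \<Rightarrow> ('x atom list \<Rightarrow> ('x, 'k) opoly) \<Rightarrow> 'x atom list \<Rightarrow> ('x, 'k) opoly" where
  "PF lam F [] = rc [] (Pp (F []))"
| "PF lam F (Let x # m) = rc (Let x # m) (Pp (F []))"
| "PF lam F (Pw y # m) = rc m (Pp (PF lam F y + F [Pw y] + scal lam (F y)))"
  by pat_completeness auto
termination by (relation "measure (\<lambda>(_,_,m). size_list size m)") auto

lemmas extsimps = ext_comp ext_add ext_scal ext_fadd ext_fscal ext_diff ext_fdiff scal_add scal_minus rc_def Pp_def lc_def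

lemma PF_RB:
  "ext (PF lam A) (PF lam B m) = PF lam (\<lambda>k. ext (PF lam A) (B k)) m
     + PF lam (\<lambda>k. ext A (PF lam B k)) m + scal lam (PF lam (\<lambda>k. ext A (B k)) m)"
proof (induction lam B m rule: PF.induct)
  case (1 lam F)
  then show ?case by (simp add: extsimps algebra_simps)
next
  case (2 lam F x m)
  then show ?case by (simp add: extsimps algebra_simps)
next
  case (3 lam F y m)
  have "ext (\<lambda>w. Poly_Mapping.single (Pw w # m) 1) (ext (PF lam A) (PF lam F y)) =
    ext (\<lambda>w. Poly_Mapping.single (Pw w # m) 1) (PF lam (\<lambda>k. ext (PF lam A) (F k)) y
     + PF lam (\<lambda>k. ext A (PF lam F k)) y + scal lam (PF lam (\<lambda>k. ext A (F k)) y))"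
    using 3 by simp
  then show ?case by (simp add: extsimps algebra_simps)
qed



fun NFa :: "'k::comm_ring_1 \<Rightarrow> 'x atom \<Rightarrow> 'x atom list \<Rightarrow> ('x, 'k) opoly"
and NFl :: "'k::comm_ring_1 \<Rightarrow> 'x atom list \<Rightarrow> 'x atom list \<Rightarrow> ('x, 'k) opoly" where
  "NFa lam (Let x) = (\<lambda>m. Poly_Mapping.single (Let x # m) 1)"
| "NFa lam (Pw v) = PF lam (NFl lam v)"
| "NFl lam [] = (\<lambda>m. Poly_Mapping.single m 1)"
| "NFl lam (a # w) = (\<lambda>m. ext (NFa lam a) (NFl lam w m))"

lemma NFl_append: "NFl lam (u @ v) m = ext (NFl lam u) (NFl lam v m)"
  by (induction u) (simp_all add: ext_comp)

lemma PF_lin: "ext (\<lambda>w. PF lam (G w) m) s = PF lam (\<lambda>k. ext (\<lambda>w. G w k) s) m"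
proof (induction m rule: measure_induct_rule[where f="size_list size"])
  case (less m)
  show ?case
  proof (cases m)
    case Nil
    then show ?thesis by (simp add: extsimps)
  next
    case (Cons a m')
    then show ?thesis
    proof (cases a)
      case (Let x)
      then show ?thesis using Cons by (simp add: extsimps)
    next
      case (Pw y)
      have "size_list size y < size_list size m" using Cons Pw by simp
      then show ?thesis using Cons Pw less[of y, symmetric] by (simp add: extsimps)
    qed
  qed
qed

lemma PF_zero[simp]: "PF lam (\<lambda>k. 0) m = 0"
  using PF_lin[of lam "\<lambda>w k. 0" m 0] by simp

lemma NF_RB: "ext (\<lambda>w. NFl lam w m) (RB lam x y) = 0"
proof -
  have e1: "NFl lam (x @ [Pw y]) = (\<lambda>k. ext (NFl lam x) (PF lam (NFl lam y) k))"
    by (rule HOL.ext) (simp add: NFl_append)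
  have e2: "NFl lam (x @ y) = (\<lambda>k. ext (NFl lam x) (NFl lam y k))"
    by (rule HOL.ext) (simp add: NFl_append)
  show ?thesis
    using PF_RB[of lam "NFl lam x" "NFl lam y" m]
    by (simp add: RB_def Pword_def ext_diff e1 e2 del: NFl.simps(2)) (simp add: algebra_simps e1 e2)
qed

lemma sub_const:
  fixes a :: "'x option atom" and u :: "'x option atom list"
  shows "nstar_a a = 0 \<Longrightarrow> sub_a w a = sub_a w' a" and "nstar_l u = 0 \<Longrightarrow> sub_w w u = sub_w w' u"
  by (induction a and u rule: nstar_a_nstar_l.induct) auto

lemma starB:
  fixes a :: "'x option atom" and u :: "'x option atom list"
  assumes Z: "\<And>m. ext (\<lambda>w. NFl lam w m) s = 0"
  shows "nstar_a a = 1 \<Longrightarrow> ext (\<lambda>w. NFl lam (sub_a w a) m) s = 0"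
    and "nstar_l u = 1 \<Longrightarrow> ext (\<lambda>w. NFl lam (sub_w w u) m) s = 0"
proof (induction a and u arbitrary: m and m rule: nstar_a_nstar_l.induct)
  case 1
  then show ?case using Z by simp
next
  case (2 x)
  then show ?case by simp
next
  case (3 u)
  then show ?case by (simp add: PF_lin)
next
  case 4
  then show ?case by simp
next
  case (5 a u)
  show ?case
  proof (cases "nstar_a a = 1")
    case True
    then have u0: "nstar_l u = 0" using 5 by simp
    obtain cu where c: "\<And>w. sub_w w u = cu" using sub_const(2)[OF u0] by blast
    have "ext (\<lambda>w. NFl lam (sub_w w (a # u)) m) s
        = ext (\<lambda>w. ext (NFl lam (sub_a w a)) (NFl lam cu m)) s"
      by (simp add: NFl_append c)
    also have "\<dots> = ext (\<lambda>k. ext (\<lambda>w. NFl lam (sub_a w a) k) s) (NFl lam cu m)"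
      by (rule ext_swap)
    also have "\<dots> = 0" using 5(1)[OF True] by simp
    finally show ?thesis .
  next
    case False
    then have a0: "nstar_a a = 0" and u1: "nstar_l u = 1" using 5 by auto
    obtain ca where c: "\<And>w. sub_a w a = ca" using sub_const(1)[OF a0] by blast
    have "ext (\<lambda>w. NFl lam (sub_w w (a # u)) m) s
        = ext (\<lambda>w. ext (NFl lam ca) (NFl lam (sub_w w u) m)) s"
      by (simp add: NFl_append c)
    also have "\<dots> = ext (NFl lam ca) (ext (\<lambda>w. NFl lam (sub_w w u) m) s)"
      by (rule ext_comp[symmetric])
    also have "\<dots> = 0" using 5(2)[OF u1] by simp
    finally show ?thesis .
  qed
qed



fun isPw :: "'x atom \<Rightarrow> bool" where
  "isPw (Pw _) = True" | "isPw (Let _) = False"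
fun startsP :: "'x atom list \<Rightarrow> bool" where
  "startsP (a # _) = isPw a" | "startsP [] = False"

fun nppa :: "'x atom \<Rightarrow> bool" and nppl :: "'x atom list \<Rightarrow> bool" where
  "nppa (Let x) = True"
| "nppa (Pw u) = nppl u"
| "nppl [] = True"
| "nppl (a # u) = (nppa a \<and> nppl u \<and> \<not> (isPw a \<and> startsP u))"

lemma rcPp: "rc m (Pp X) = ext (\<lambda>z. Poly_Mapping.single (Pw z # m) 1) X"
  by (simp add: extsimps)

lemma keys_rcPp: "Poly_Mapping.keys (rc m (Pp X)) \<subseteq> (\<lambda>z. Pw z # m) ` Poly_Mapping.keys X"
  unfolding rcPp using keys_ext[of "\<lambda>z. Poly_Mapping.single (Pw z # m) 1" X] by auto

lemma keys_scal: "Poly_Mapping.keys (scal c p) \<subseteq> Poly_Mapping.keys p"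
  by (auto simp: in_keys_iff)

lemma NF_id:
  fixes a :: "'x atom" and u :: "'x atom list"
  shows "\<forall>k. nppl (a # k) \<longrightarrow> NFa lam a k = Poly_Mapping.single (a # k) 1"
    and "\<forall>m. nppl (u @ m) \<longrightarrow> NFl lam u m = Poly_Mapping.single (u @ m) 1"
proof (induction a and u rule: wfa_wfl.induct)
  case (2 v)
  show ?case
  proof (intro allI impI)
    fix k assume h: "nppl (Pw v # k)"
    then have "nppl (v @ [])" by simp
    then have v: "NFl lam v [] = Poly_Mapping.single v 1" using 2[rule_format, of "[]"] by simp
    show "NFa lam (Pw v) k = Poly_Mapping.single (Pw v # k) 1"
    proof (cases k)
      case Nil then show ?thesis using v by (simp add: extsimps)
    next
      case (Cons b k')
      then show ?thesis using h v by (cases b) (simp_all add: extsimps)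
    qed
  qed
next
  case (4 a u)
  then show ?case by simp
qed simp_all

definition goodop :: "('x atom list \<Rightarrow> ('x, 'k::comm_ring_1) opoly) \<Rightarrow> bool" where
  "goodop F \<longleftrightarrow> (\<forall>m. wfl m \<longrightarrow> (\<forall>k\<in>Poly_Mapping.keys (F m). k \<noteq> [] \<and> wfl k \<and> (nppl m \<longrightarrow> nppl k)))"

lemma PF_good:
  fixes F :: "'x atom list \<Rightarrow> ('x, 'k::comm_ring_1) opoly"
  assumes "goodop F"
  shows "goodop (PF lam F)"
  unfolding goodop_def
proof (intro allI)
  fix m :: "'x atom list"
  show "wfl m \<longrightarrow> (\<forall>k\<in>Poly_Mapping.keys (PF lam F m). k \<noteq> [] \<and> wfl k \<and> (nppl m \<longrightarrow> nppl k))"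
  proof (induction m rule: measure_induct_rule[where f="size_list size"])
    case (less m)
    have G: "\<And>m k. wfl m \<Longrightarrow> k \<in> Poly_Mapping.keys (F m) \<Longrightarrow> k \<noteq> [] \<and> wfl k \<and> (nppl m \<longrightarrow> nppl k)"
      using assms unfolding goodop_def by blast
    show ?case
    proof (intro impI ballI)
      fix k assume wm: "wfl m" and k: "k \<in> Poly_Mapping.keys (PF lam F m)"
      show "k \<noteq> [] \<and> wfl k \<and> (nppl m \<longrightarrow> nppl k)"
      proof (cases "startsP m")
        case False
        then have "PF lam F m = rc m (Pp (F []))"
        proof (cases m)
          case (Cons b m')
          then show ?thesis using False by (cases b) auto
        qed simp
        with k keys_rcPp[of m "F []"] obtain z where z: "z \<in> Poly_Mapping.keys (F [])" "k = Pw z # m" by auto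
        then show ?thesis using G[of "[]" z] wm False by auto
      next
        case True
        then obtain y m' where m: "m = Pw y # m'"
          by (metis isPw.elims(2) startsP.elims(2))
        have y: "y \<noteq> []" "wfl y" "wfl m'" using wm m by auto
        have lt: "size_list size y < size_list size m" using m by simp
        have "k \<in> Poly_Mapping.keys (rc m' (Pp (PF lam F y + F [Pw y] + scal lam (F y))))"
          using k m by simp
        with keys_rcPp[of m' "PF lam F y + F [Pw y] + scal lam (F y)"] obtain z where z: "z \<in> Poly_Mapping.keys (PF lam F y + F [Pw y] + scal lam (F y))"
          "k = Pw z # m'" by auto
        then have "z \<in> Poly_Mapping.keys (PF lam F y) \<or> z \<in> Poly_Mapping.keys (F [Pw y]) \<or> z \<in> Poly_Mapping.keys (F y)"
          using keys_add[of "PF lam F y + F [Pw y]" "scal lam (F y)"] keys_add[of "PF lam F y" "F [Pw y]"]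
            keys_scal[of lam "F y"] by blast
        moreover have "wfl [Pw y]" using y by simp
        ultimately have "z \<noteq> [] \<and> wfl z \<and> (nppl y \<longrightarrow> nppl z)"
          using less[OF lt] G[of "[Pw y]" z] G[of y z] y by auto
        then show ?thesis using z m wm by auto
      qed
    qed
  qed
qed

lemma NF_good:
  fixes a :: "'x atom" and u :: "'x atom list"
  shows "wfa a \<Longrightarrow> goodop (NFa lam a)"
    and "wfl u \<Longrightarrow> \<forall>m. wfl m \<longrightarrow> (\<forall>k\<in>Poly_Mapping.keys (NFl lam u m). (u \<noteq> [] \<longrightarrow> k \<noteq> []) \<and> wfl k \<and> (nppl m \<longrightarrow> nppl k))"
proof (induction a and u rule: wfa_wfl.induct)
  case (1 x)
  then show ?case by (simp add: goodop_def)
next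
  case (2 v)
  then have "goodop (NFl lam v)" by (simp add: goodop_def)
  then show ?case by (simp add: PF_good)
next
  case 3
  then show ?case by simp
next
  case (4 a u)
  show ?case
  proof (intro allI impI ballI)
    fix m k assume wm: "wfl m" and k: "k \<in> Poly_Mapping.keys (NFl lam (a # u) m)"
    then obtain k' where k': "k' \<in> Poly_Mapping.keys (NFl lam u m)" "k \<in> Poly_Mapping.keys (NFa lam a k')"
      using keys_ext[of "NFa lam a" "NFl lam u m"] by auto
    have "wfl k' \<and> (nppl m \<longrightarrow> nppl k')" using 4 k' wm by auto
    moreover have "goodop (NFa lam a)" using 4 by auto
    ultimately show "(a # u \<noteq> [] \<longrightarrow> k \<noteq> []) \<and> wfl k \<and> (nppl m \<longrightarrow> nppl k)"
      using k' unfolding goodop_def by blast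
  qed
qed



lemma emb_props:
  fixes a :: "'x atom" and u :: "'x atom list"
  shows "sub_a w (map_atom Some a) = [a] \<and> nstar_a (map_atom Some a) = 0 \<and> wfa (map_atom Some a) = wfa a"
    and "sub_w w (map (map_atom Some) u) = u \<and> nstar_l (map (map_atom Some) u) = 0 \<and> wfl (map (map_atom Some) u) = wfl u"
  by (induction a and u rule: wfa_wfl.induct) auto

lemma sub_w_append: "sub_w w (u @ v) = sub_w w u @ sub_w w v"
  by (induction u) auto
lemma nstar_l_append: "nstar_l (u @ v) = nstar_l u + nstar_l v"
  by (induction u) auto
lemma wfl_append: "wfl (u @ v) = (wfl u \<and> wfl v)"
  by (induction u) auto

abbreviation Gen :: "('x, 'k::comm_ring_1) opoly set \<Rightarrow> ('x, 'k) opoly set" where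
  "Gen S \<equiv> {lin (\<lambda>w. sub_w w u) s | u s. u \<in> StarWords \<and> s \<in> S}"

lemma Idl_span: "Idl S = SC.span (Gen S)"
  by (simp add: Idl_def)

lemma idl_ext: "(\<And>w. w \<in> Poly_Mapping.keys p \<Longrightarrow> F w \<in> Idl S) \<Longrightarrow> ext F p \<in> Idl S"
  unfolding Idl_span by (rule span_ext)

lemma idl_closed:
  assumes f: "\<And>u. u \<in> StarWords \<Longrightarrow> \<exists>u'\<in>StarWords. \<forall>w. f (sub_w w u) = sub_w w u'"
    and p: "p \<in> Idl S"
  shows "ext (\<lambda>w. Poly_Mapping.single (f w) 1) p \<in> Idl S"
proof -
  have "p \<in> SC.span (Gen S)" using p by (simp add: Idl_span)
  then show ?thesis unfolding Idl_span
  proof (induction rule: SC.span_induct_alt)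
    case base
    then show ?case by (simp add: SC.span_zero)
  next
    case (step c x y)
    then obtain u s where x: "x = lin (\<lambda>w. sub_w w u) s" "u \<in> StarWords" "s \<in> S" by blast
    obtain u' where u': "u' \<in> StarWords" "\<And>w. f (sub_w w u) = sub_w w u'" using f[OF x(2)] by blast
    have "ext (\<lambda>w. Poly_Mapping.single (f w) 1) x = lin (\<lambda>w. sub_w w u') s"
      by (simp add: x lin_ext ext_comp u')
    then have "ext (\<lambda>w. Poly_Mapping.single (f w) 1) x \<in> SC.span (Gen S)"
      using u' x by (intro SC.span_base) blast
    then show ?case using step
      by (simp add: ext_add ext_scal SC.span_add SC.span_scale)
  qed
qed

lemma lc_idl: "wfl L \<Longrightarrow> p \<in> Idl S \<Longrightarrow> lc L p \<in> Idl S"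
  unfolding lc_def
proof (rule idl_closed)
  fix u :: "'a option atom list" assume L: "wfl L" and u: "u \<in> StarWords"
  show "\<exists>u'\<in>StarWords. \<forall>w. L @ sub_w w u = sub_w w u'"
    using u L emb_props(2)[of w L]
    by (intro bexI[of _ "map (map_atom Some) L @ u"])
       (auto simp: StarWords_def wfw_def sub_w_append nstar_l_append wfl_append emb_props)
qed

lemma rc_idl: "wfl R \<Longrightarrow> p \<in> Idl S \<Longrightarrow> rc R p \<in> Idl S"
  unfolding rc_def
proof (rule idl_closed)
  fix u :: "'a option atom list" assume R: "wfl R" and u: "u \<in> StarWords"
  show "\<exists>u'\<in>StarWords. \<forall>w. sub_w w u @ R = sub_w w u'"
    using u R
    by (intro bexI[of _ "u @ map (map_atom Some) R"])
       (auto simp: StarWords_def wfw_def sub_w_append nstar_l_append wfl_append emb_props)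
qed

lemma Pp_idl: "p \<in> Idl S \<Longrightarrow> Pp p \<in> Idl S"
  unfolding Pp_def
proof (rule idl_closed)
  fix u :: "'a option atom list" assume u: "u \<in> StarWords"
  show "\<exists>u'\<in>StarWords. \<forall>w. [Pw (sub_w w u)] = sub_w w u'"
    using u by (intro bexI[of _ "[Pw u]"]) (auto simp: StarWords_def wfw_def)
qed

lemma RB_idl:
  assumes "x \<in> Words" "y \<in> Words"
  shows "RB lam x y \<in> Idl (RBS lam)"
proof -
  have st: "[Let None] \<in> StarWords" by (simp add: StarWords_def wfw_def)
  have "lin (\<lambda>w. sub_w w [Let None]) (RB lam x y) = RB lam x y"
    by (simp add: lin_ext)
  moreover have rb: "RB lam x y \<in> RBS lam" using assms unfolding RBS_def by blast
  have "lin (\<lambda>w. sub_w w [Let None]) (RB lam x y) \<in> Gen (RBS lam)"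
    using st rb by blast
  ultimately have "RB lam x y \<in> Gen (RBS lam)" by simp
  then show ?thesis unfolding Idl_span by (rule SC.span_base)
qed

lemma idl_add: "p \<in> Idl S \<Longrightarrow> q \<in> Idl S \<Longrightarrow> p + q \<in> Idl S"
  unfolding Idl_span by (rule SC.span_add)
lemma idl_diff: "p \<in> Idl S \<Longrightarrow> q \<in> Idl S \<Longrightarrow> p - q \<in> Idl S"
  unfolding Idl_span by (rule SC.span_diff)
lemma idl_scal: "p \<in> Idl S \<Longrightarrow> scal c p \<in> Idl S"
  unfolding Idl_span by (rule SC.span_scale)
lemma idl_zero: "0 \<in> Idl S"
  unfolding Idl_span by (rule SC.span_zero)



lemma span_PF:
  assumes v: "v \<in> Words"
    and IH: "\<And>m. wfl m \<Longrightarrow> Poly_Mapping.single (v @ m) 1 - NFl lam v m \<in> Idl (RBS lam)"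
  shows "wfl m \<Longrightarrow> Poly_Mapping.single (Pw v # m) 1 - PF lam (NFl lam v) m \<in> Idl (RBS lam)"
proof (induction m rule: measure_induct_rule[where f="size_list size"])
  case (less m)
  show ?case
  proof (cases "startsP m")
    case False
    then have "PF lam (NFl lam v) m = rc m (Pp (NFl lam v []))"
    proof (cases m)
      case (Cons b m')
      then show ?thesis using False by (cases b) auto
    qed simp
    then have "Poly_Mapping.single (Pw v # m) 1 - PF lam (NFl lam v) m
        = rc m (Pp (Poly_Mapping.single (v @ []) 1 - NFl lam v []))"
      by (simp add: extsimps)
    then show ?thesis using rc_idl[OF less.prems Pp_idl[OF IH[of "[]", simplified]]] by simp
  next
    case True
    then obtain y m' where m: "m = Pw y # m'"
      by (metis isPw.elims(2) startsP.elims(2))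
    have y: "y \<in> Words" "wfl m'" "wfl [Pw y]" using less.prems m by (auto simp: Words_def wfw_def)
    have lt: "size_list size y < size_list size m" using m by simp
    have eq: "Poly_Mapping.single (Pw v # m) 1 - PF lam (NFl lam v) m
      = rc m' (RB lam v y) + rc m' (Pp ((Poly_Mapping.single (Pw v # y) 1 - PF lam (NFl lam v) y)
          + (Poly_Mapping.single (v @ [Pw y]) 1 - NFl lam v [Pw y])
          + scal lam (Poly_Mapping.single (v @ y) 1 - NFl lam v y)))"
      by (simp add: m RB_def Pword_def extsimps algebra_simps)
    have "Poly_Mapping.single (Pw v # y) 1 - PF lam (NFl lam v) y \<in> Idl (RBS lam)"
      using less.IH[OF lt] y by (simp add: Words_def wfw_def)
    moreover have "Poly_Mapping.single (v @ [Pw y]) 1 - NFl lam v [Pw y] \<in> Idl (RBS lam)"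
      using IH y by simp
    moreover have "Poly_Mapping.single (v @ y) 1 - NFl lam v y \<in> Idl (RBS lam)"
      using IH y by (simp add: Words_def wfw_def)
    ultimately show ?thesis unfolding eq
      by (intro idl_add rc_idl RB_idl Pp_idl idl_scal v y) (simp_all add: y)
  qed
qed

lemma span_NF:
  fixes a :: "'x atom" and u :: "'x atom list"
  shows "wfa a \<Longrightarrow> \<forall>m. wfl m \<longrightarrow> Poly_Mapping.single (a # m) 1 - NFa lam a m \<in> Idl (RBS lam)"
    and "wfl u \<Longrightarrow> \<forall>m. wfl m \<longrightarrow> Poly_Mapping.single (u @ m) 1 - NFl lam u m \<in> Idl (RBS lam)"
proof (induction a and u rule: wfa_wfl.induct)
  case (1 x)
  then show ?case by (simp add: idl_zero)
next
  case (2 v)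
  then have v: "v \<in> Words" by (simp add: Words_def wfw_def)
  have IH: "\<And>m. wfl m \<Longrightarrow> Poly_Mapping.single (v @ m) 1 - NFl lam v m \<in> Idl (RBS lam)"
    using 2 by auto
  show ?case using span_PF[OF v IH] by simp
next
  case 3
  then show ?case by (simp add: idl_zero)
next
  case (4 a u)
  show ?case
  proof (intro allI impI)
    fix m :: "'x atom list" assume wm: "wfl m"
    define d where "d = Poly_Mapping.single (u @ m) 1 - NFl lam u m"
    have eq: "Poly_Mapping.single ((a # u) @ m) 1 - NFl lam (a # u) m
      = (Poly_Mapping.single (a # (u @ m)) 1 - NFa lam a (u @ m)) + lc [a] d
        - ext (\<lambda>k. Poly_Mapping.single (a # k) 1 - NFa lam a k) d"
      by (simp add: d_def lc_def ext_diff ext_fdiff algebra_simps)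
    have wa: "wfa a" "wfl u" using 4 by auto
    have d: "d \<in> Idl (RBS lam)" using 4 wa wm by (simp add: d_def)
    have "\<forall>k\<in>Poly_Mapping.keys d. wfl k"
    proof
      fix k assume "k \<in> Poly_Mapping.keys d"
      then have "k = u @ m \<or> k \<in> Poly_Mapping.keys (NFl lam u m)"
        using keys_diff[of "Poly_Mapping.single (u @ m) 1" "NFl lam u m"] by (auto simp: d_def)
      then show "wfl k" using NF_good(2)[OF wa(2)] wm wa by (auto simp: wfl_append)
    qed
    then have h3: "ext (\<lambda>k. Poly_Mapping.single (a # k) 1 - NFa lam a k) d \<in> Idl (RBS lam)"
      using 4 wa by (intro idl_ext) auto
    have h2: "lc [a] d \<in> Idl (RBS lam)" using d wa by (intro lc_idl) auto
    have h1: "Poly_Mapping.single (a # (u @ m)) 1 - NFa lam a (u @ m) \<in> Idl (RBS lam)"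
      using 4 wa wm by (simp add: wfl_append)
    show "Poly_Mapping.single ((a # u) @ m) 1 - NFl lam (a # u) m \<in> Idl (RBS lam)"
      unfolding eq by (rule idl_diff[OF idl_add[OF h1 h2] h3])
  qed
qed

lemma idl_NF_zero:
  assumes "q \<in> Idl (RBS lam)"
  shows "ext (\<lambda>w. NFl lam w m) q = 0"
proof -
  have "q \<in> SC.span (Gen (RBS lam))" using assms by (simp add: Idl_span)
  then show ?thesis
  proof (induction rule: SC.span_induct_alt)
    case base
    then show ?case by simp
  next
    case (step c x y)
    then obtain u s where x: "x = lin (\<lambda>w. sub_w w u) s" "u \<in> StarWords" "s \<in> RBS lam" by blast
    obtain a b where s: "s = RB lam a b" using x(3) unfolding RBS_def by blast
    have "ext (\<lambda>w. NFl lam w m) x = ext (\<lambda>w. NFl lam (sub_w w u) m) s"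
      by (simp add: x lin_ext ext_comp)
    also have "\<dots> = 0"
      using starB(2)[of lam s u m] NF_RB[of lam _ a b] x(2) s by (simp add: StarWords_def)
    finally show ?case using step by (simp add: ext_add ext_scal)
  qed
qed

lemma NF_fix:
  assumes "\<And>w. w \<in> Poly_Mapping.keys q \<Longrightarrow> nppl w"
  shows "ext (\<lambda>w. NFl lam w []) q = q"
proof -
  have "ext (\<lambda>w. NFl lam w []) q = ext (\<lambda>w. Poly_Mapping.single w 1) q"
  proof (rule ext_cong)
    fix w assume "w \<in> Poly_Mapping.keys q"
    then have "nppl (w @ [])" using assms by simp
    then show "NFl lam w [] = Poly_Mapping.single w 1" using NF_id(2)[rule_format, of w "[]"] by simp
  qed
  then show ?thesis by simp
qed



fun noadj :: "'x atom list \<Rightarrow> bool" where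
  "noadj [] = True"
| "noadj (a # r) = (\<not> (isPw a \<and> startsP r) \<and> noadj r)"

definition ok :: "'x atom list set \<Rightarrow> 'x atom list \<Rightarrow> bool" where
  "ok Z w \<longleftrightarrow> noadj w \<and> (\<forall>z. Pw z \<in> set w \<longrightarrow> z \<in> Z)"

lemma noadj_append: "noadj (u @ v) = (noadj u \<and> noadj v \<and> \<not> (u \<noteq> [] \<and> isPw (last u) \<and> startsP v))"
proof (induction u)
  case Nil then show ?case by simp
next
  case (Cons a u)
  then show ?case by (cases u) auto
qed

lemma startsP_append: "u \<noteq> [] \<Longrightarrow> startsP (u @ v) = startsP u"
  by (cases u) auto

lemma noadj_map_Let[simp]: "noadj (map Let xs)"
  by (induction xs) auto

lemma startsP_map_Let[simp]: "\<not> startsP (map Let xs)"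
  by (cases xs) auto

lemma spow_Cons: assumes "b \<in> A" "a \<in> spow A r" shows "b @ a \<in> spow A (Suc r)"
proof -
  from assms obtain ws where "a = concat ws" "length ws = r" "set ws \<subseteq> A" by (auto simp: spow_def)
  then show ?thesis unfolding spow_def using assms(1) by (intro CollectI exI[of _ "b # ws"]) auto
qed

lemma spow_0: "[] \<in> spow A 0"
  unfolding spow_def by auto

lemma spow_1: "b \<in> A \<Longrightarrow> b \<in> spow A (Suc 0)"
  using spow_Cons[OF _ spow_0] by fastforce

lemma YPZ_blocks:
  assumes "set ws \<subseteq> YPZ SX Z"
  shows "ok Z (concat ws) \<and> \<not> startsP (concat ws) \<and> (ws \<noteq> [] \<longrightarrow> concat ws \<noteq> [] \<and> isPw (last (concat ws)))"
  using assms
proof (induction ws)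
  case Nil then show ?case by (simp add: ok_def)
next
  case (Cons b ws)
  then obtain xs z where b: "b = map Let xs @ [Pw z]" "xs \<noteq> []" "z \<in> Z"
    by (auto simp: YPZ_def SX_def Pword_def)
  have IH: "ok Z (concat ws)" "\<not> startsP (concat ws)" "ws \<noteq> [] \<longrightarrow> concat ws \<noteq> [] \<and> isPw (last (concat ws))"
    using Cons by auto
  have "noadj b" using b by (simp add: noadj_append last_map)
  then have "noadj (b @ concat ws)" using IH b by (simp add: noadj_append ok_def)
  moreover have "\<not> startsP (b @ concat ws)" using b by (cases xs) auto
  moreover have "isPw (last (b @ concat ws))"
    using IH b by (cases "ws = []") (auto simp: last_append)
  ultimately show ?case using IH b by (auto simp: ok_def)
qed

lemma PZY_blocks:
  assumes "set ws \<subseteq> PZY SX Z"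
  shows "ok Z (concat ws) \<and> (ws \<noteq> [] \<longrightarrow> concat ws \<noteq> [] \<and> \<not> isPw (last (concat ws)))"
  using assms
proof (induction ws)
  case Nil then show ?case by (simp add: ok_def)
next
  case (Cons b ws)
  then obtain xs z where b: "b = Pw z # map Let xs" "xs \<noteq> []" "z \<in> Z"
    by (auto simp: PZY_def SX_def Pword_def)
  have IH: "ok Z (concat ws)" "ws \<noteq> [] \<longrightarrow> concat ws \<noteq> [] \<and> \<not> isPw (last (concat ws))"
    using Cons by auto
  have lb: "\<not> isPw (last b)" using b by (cases xs rule: rev_cases) auto
  have "noadj b" using b by simp
  then have "noadj (b @ concat ws)" using IH b lb by (simp add: noadj_append ok_def startsP_append)
  moreover have "\<not> isPw (last (b @ concat ws))"
    using IH lb by (cases "ws = []") (auto simp: last_append)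
  ultimately show ?case using IH b by (auto simp: ok_def)
qed

lemma Lam_sub: "w \<in> Lam SX Z \<Longrightarrow> w \<noteq> [] \<and> ok Z w"
  unfolding Lam_def
proof (elim UnE)
  assume "w \<in> (\<Union>r\<in>{1..}. spow (YPZ SX Z) r)"
  then obtain r where r: "r \<ge> 1" "w \<in> spow (YPZ SX Z) r" by auto
  then obtain ws where ws: "w = concat ws" "length ws = r" "set ws \<subseteq> YPZ SX Z"
    by (auto simp: spow_def)
  then have "ws \<noteq> []" using r by auto
  then show ?thesis using YPZ_blocks[OF ws(3)] ws(1) by auto
next
  assume "w \<in> (\<Union>r. {a @ y | a y. a \<in> spow (YPZ SX Z) r \<and> y \<in> SX})"
  then obtain ws xs where w: "w = concat ws @ map Let xs" "xs \<noteq> []" "set ws \<subseteq> YPZ SX Z"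
    by (auto simp: spow_def SX_def)
  then show ?thesis using YPZ_blocks[OF w(3)] by (auto simp: ok_def noadj_append)
next
  assume "w \<in> (\<Union>r\<in>{1..}. spow (PZY SX Z) r)"
  then obtain r where r: "r \<ge> 1" "w \<in> spow (PZY SX Z) r" by auto
  then obtain ws where ws: "w = concat ws" "length ws = r" "set ws \<subseteq> PZY SX Z"
    by (auto simp: spow_def)
  then have "ws \<noteq> []" using r by auto
  then show ?thesis using PZY_blocks[OF ws(3)] ws(1) by auto
next
  assume "w \<in> (\<Union>r. {a @ Pword z | a z. a \<in> spow (PZY SX Z) r \<and> z \<in> Z})"
  then obtain ws z where w: "w = concat ws @ [Pw z]" "z \<in> Z" "set ws \<subseteq> PZY SX Z"
    by (auto simp: spow_def Pword_def)
  then show ?thesis using PZY_blocks[OF w(3)] by (auto simp: ok_def noadj_append)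
qed

lemma letter_split:
  "\<not> startsP w \<Longrightarrow> w \<noteq> [] \<Longrightarrow> \<exists>xs rest. w = map Let xs @ rest \<and> xs \<noteq> [] \<and> (rest = [] \<or> startsP rest)"
proof (induction w)
  case Nil then show ?case by simp
next
  case (Cons a r)
  then obtain x where a: "a = Let x" by (cases a) auto
  show ?case
  proof (cases "r = [] \<or> startsP r")
    case True
    then show ?thesis using a by (intro exI[of _ "[x]"] exI[of _ r]) auto
  next
    case False
    then obtain xs rest where "r = map Let xs @ rest" "xs \<noteq> []" "rest = [] \<or> startsP rest"
      using Cons by auto
    then show ?thesis using a by (intro exI[of _ "x # xs"] exI[of _ rest]) auto
  qed
qed

lemma ok_Cons: "ok Z (a # r) = (ok Z r \<and> \<not> (isPw a \<and> startsP r) \<and> (\<forall>z. a = Pw z \<longrightarrow> z \<in> Z))"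
  by (auto simp: ok_def)

lemma ok_append: "ok Z (u @ v) \<Longrightarrow> ok Z u \<and> ok Z v"
  by (auto simp: ok_def noadj_append)

lemma ok_map_Let[simp]: "ok Z (map Let xs)"
  by (auto simp: ok_def)

lemma inU1: "w \<in> spow A (Suc r) \<Longrightarrow> w \<in> (\<Union>r\<in>{1..}. spow A r)"
  by auto
lemma inU2: "a \<in> spow A r \<Longrightarrow> y \<in> Y \<Longrightarrow> a @ y \<in> (\<Union>r. {a @ y | a y. a \<in> spow A r \<and> y \<in> Y})"
  by blast
lemma inU4: "a \<in> spow A r \<Longrightarrow> z \<in> Z \<Longrightarrow> a @ Pword z \<in> (\<Union>r. {a @ Pword z | a z. a \<in> spow A r \<and> z \<in> Z})"
  by blast

lemma Lam_sup_aux: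
  "ok Z w \<Longrightarrow> w \<noteq> [] \<Longrightarrow>
    (\<not> startsP w \<longrightarrow> w \<in> (\<Union>r\<in>{1..}. spow (YPZ SX Z) r) \<union> (\<Union>r. {a @ y |a y. a \<in> spow (YPZ SX Z) r \<and> y \<in> SX}))
  \<and> (startsP w \<longrightarrow> w \<in> (\<Union>r\<in>{1..}. spow (PZY SX Z) r) \<union> (\<Union>r. {a @ Pword z |a z. a \<in> spow (PZY SX Z) r \<and> z \<in> Z}))"
proof (induction "length w" arbitrary: w rule: less_induct)
  case less
  show ?case
  proof (intro conjI impI)
    assume ns: "\<not> startsP w"
    obtain xs rest where w: "w = map Let xs @ rest" "xs \<noteq> []" "rest = [] \<or> startsP rest"
      using letter_split[OF ns less.prems(2)] by blast
    have SXx: "map Let xs \<in> SX" using w by (auto simp: SX_def)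
    show "w \<in> (\<Union>r\<in>{1..}. spow (YPZ SX Z) r) \<union> (\<Union>r. {a @ y |a y. a \<in> spow (YPZ SX Z) r \<and> y \<in> SX})"
    proof (cases "rest = []")
      case True
      then show ?thesis using inU2[OF spow_0 SXx] w by auto
    next
      case False
      then obtain z rest' where r: "rest = Pw z # rest'"
        using w(3) by (metis isPw.elims(2) startsP.elims(2))
      have okr: "ok Z rest" using ok_append less.prems(1) w(1) by blast
      then have z: "z \<in> Z" "\<not> startsP rest'" "ok Z rest'" using r by (auto simp: ok_Cons)
      have b: "map Let xs @ [Pw z] \<in> YPZ SX Z" using SXx z by (auto simp: YPZ_def Pword_def)
      show ?thesis
      proof (cases "rest' = []")
        case True
        then show ?thesis using inU1[OF spow_1[OF b]] w r by auto
      next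
        case False
        have "length rest' < length w" using w r by simp
        then have IH: "rest' \<in> (\<Union>r\<in>{1..}. spow (YPZ SX Z) r) \<union> (\<Union>r. {a @ y |a y. a \<in> spow (YPZ SX Z) r \<and> y \<in> SX})"
          using less.hyps[of rest'] z False by blast
        have ww: "w = (map Let xs @ [Pw z]) @ rest'" using w r by simp
        from IH show ?thesis
        proof
          assume "rest' \<in> (\<Union>r\<in>{1..}. spow (YPZ SX Z) r)"
          then obtain k where "rest' \<in> spow (YPZ SX Z) k" by blast
          then show ?thesis using inU1[OF spow_Cons[OF b]] ww by blast
        next
          assume "rest' \<in> (\<Union>r. {a @ y |a y. a \<in> spow (YPZ SX Z) r \<and> y \<in> SX})"
          then obtain k a y where "rest' = a @ y" "a \<in> spow (YPZ SX Z) k" "y \<in> SX" by blast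
          then show ?thesis using inU2[OF spow_Cons[OF b] , of a k y SX] ww by simp
        qed
      qed
    qed
  next
    assume sp: "startsP w"
    then obtain z rest where w: "w = Pw z # rest"
      by (metis isPw.elims(2) startsP.elims(2))
    have z: "z \<in> Z" "\<not> startsP rest" "ok Z rest" using less.prems(1) w by (auto simp: ok_Cons)
    show "w \<in> (\<Union>r\<in>{1..}. spow (PZY SX Z) r) \<union> (\<Union>r. {a @ Pword z |a z. a \<in> spow (PZY SX Z) r \<and> z \<in> Z})"
    proof (cases "rest = []")
      case True
      then show ?thesis using inU4[OF spow_0 z(1)] w by (auto simp: Pword_def)
    next
      case False
      obtain xs rest2 where r: "rest = map Let xs @ rest2" "xs \<noteq> []" "rest2 = [] \<or> startsP rest2"
        using letter_split[OF z(2) False] by blast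
      have b: "Pw z # map Let xs \<in> PZY SX Z" using r z by (auto simp: PZY_def Pword_def SX_def)
      have ww: "w = (Pw z # map Let xs) @ rest2" using w r by simp
      show ?thesis
      proof (cases "rest2 = []")
        case True
        then show ?thesis using inU1[OF spow_1[OF b]] ww by auto
      next
        case False
        have ok2: "ok Z rest2" using ok_append z(3) r(1) by blast
        have "length rest2 < length w" using w r by simp
        then have IH: "rest2 \<in> (\<Union>r\<in>{1..}. spow (PZY SX Z) r) \<union> (\<Union>r. {a @ Pword z |a z. a \<in> spow (PZY SX Z) r \<and> z \<in> Z})"
          using less.hyps[of rest2] ok2 False r(3) by blast
        from IH show ?thesis
        proof
          assume "rest2 \<in> (\<Union>r\<in>{1..}. spow (PZY SX Z) r)"
          then obtain k where "rest2 \<in> spow (PZY SX Z) k" by blast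
          then show ?thesis using inU1[OF spow_Cons[OF b]] ww by blast
        next
          assume "rest2 \<in> (\<Union>r. {a @ Pword z |a z. a \<in> spow (PZY SX Z) r \<and> z \<in> Z})"
          then obtain k a z' where "rest2 = a @ Pword z'" "a \<in> spow (PZY SX Z) k" "z' \<in> Z" by blast
          then show ?thesis using inU4[OF spow_Cons[OF b], of a k z' Z] ww by simp
        qed
      qed
    qed
  qed
qed

lemma Lam_char: "Lam SX Z = {w. w \<noteq> [] \<and> ok Z w}"
proof
  show "Lam SX Z \<subseteq> {w. w \<noteq> [] \<and> ok Z w}" using Lam_sub by blast
next
  show "{w. w \<noteq> [] \<and> ok Z w} \<subseteq> Lam SX Z"
  proof
    fix w assume "w \<in> {w. w \<noteq> [] \<and> ok Z w}"
    then have "ok Z w" "w \<noteq> []" by auto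
    from Lam_sup_aux[OF this] show "w \<in> Lam SX Z" unfolding Lam_def by (cases "startsP w") auto
  qed
qed



definition RW :: "'x atom list set" where "RW = {w. wfw w \<and> nppl w}"

lemma ok_nppl: "ok RW w \<longleftrightarrow> wfl w \<and> nppl w"
proof (induction w)
  case Nil then show ?case by (simp add: ok_def)
next
  case (Cons a r)
  then show ?case by (cases a) (auto simp: ok_Cons RW_def wfw_def)
qed

lemma ok_mono: "ok Z w \<Longrightarrow> Z \<subseteq> Z' \<Longrightarrow> ok Z' w"
  by (auto simp: ok_def)

lemma map_Let_props[simp]: "wfl (map Let xs)" "nppl (map Let xs)"
  by (induction xs) auto

lemma PhiN_sub: "PhiN n \<subseteq> (RW :: 'x atom list set)"
proof (induction n)
  case 0
  then show ?case by (auto simp: SX_def RW_def wfw_def)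
next
  case (Suc n)
  show ?case
  proof
    fix w :: "'x atom list" assume "w \<in> PhiN (Suc n)"
    then have "w \<noteq> []" "ok (PhiN n) w" by (auto simp: Lam_char)
    then have "ok RW w" using ok_mono[OF _ Suc] by auto
    then have "wfl w \<and> nppl w" using ok_nppl by blast
    then show "w \<in> RW" using \<open>w \<noteq> []\<close> by (simp add: RW_def wfw_def)
  qed
qed

lemma PhiN_Suc: "PhiN n \<subseteq> PhiN (Suc n)"
proof (induction n)
  case 0
  show ?case
  proof
    fix w :: "'a atom list" assume "w \<in> PhiN 0"
    then obtain xs where "w = map Let xs" "xs \<noteq> []" by (auto simp: SX_def)
    then show "w \<in> PhiN (Suc 0)" by (simp add: Lam_char)
  qed
next
  case (Suc n)
  show ?case
  proof
    fix w :: "'a atom list" assume "w \<in> PhiN (Suc n)"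
    then have "w \<noteq> []" "ok (PhiN n) w" by (auto simp: Lam_char)
    moreover have "ok (PhiN (Suc n)) w" using ok_mono[OF calculation(2) Suc] by simp
    ultimately show "w \<in> PhiN (Suc (Suc n))" by (simp add: Lam_char)
  qed
qed

lemma PhiN_mono: "m \<le> n \<Longrightarrow> PhiN m \<subseteq> PhiN n"
  by (rule lift_Suc_mono_le[of PhiN, OF PhiN_Suc])

lemma size_arg: "Pw z \<in> set w \<Longrightarrow> size_list size z < size_list size w"
  by (induction w) auto

lemma common_N:
  "(\<forall>z. Pw z \<in> set w \<longrightarrow> (\<exists>n. z \<in> PhiN n)) \<Longrightarrow> \<exists>N. \<forall>z. Pw z \<in> set w \<longrightarrow> z \<in> PhiN N"
proof (induction w)
  case Nil then show ?case by simp
next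
  case (Cons a r)
  then obtain N where N: "\<forall>z. Pw z \<in> set r \<longrightarrow> z \<in> PhiN N" by auto
  show ?case
  proof (cases a)
    case (Let x)
    then show ?thesis using N by auto
  next
    case (Pw z0)
    then obtain n where n: "z0 \<in> PhiN n" using Cons by auto
    have s1: "PhiN n \<subseteq> PhiN (max n N)" "PhiN N \<subseteq> PhiN (max n N)" by (simp_all add: PhiN_mono)
    have "\<forall>z. Pw z \<in> set (a # r) \<longrightarrow> z \<in> PhiN (max n N)"
    proof (intro allI impI)
      fix z assume "Pw z \<in> set (a # r)"
      then have "z = z0 \<or> Pw z \<in> set r" using Pw by auto
      then show "z \<in> PhiN (max n N)" using s1 N n by blast
    qed
    then show ?thesis by blast
  qed
qed

lemma RW_sub: "w \<in> RW \<Longrightarrow> \<exists>n. w \<in> PhiN n"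
proof (induction w rule: measure_induct_rule[where f="size_list size"])
  case (less w)
  have okw: "ok RW w" "w \<noteq> []" using less.prems ok_nppl by (auto simp: RW_def wfw_def)
  have "\<forall>z. Pw z \<in> set w \<longrightarrow> (\<exists>n. z \<in> PhiN n)"
  proof (intro allI impI)
    fix z assume z: "Pw z \<in> set w"
    then have "z \<in> RW" using okw(1) unfolding ok_def by blast
    then show "\<exists>n. z \<in> PhiN n" using less.IH[OF size_arg[OF z]] by blast
  qed
  then obtain N where N: "\<forall>z. Pw z \<in> set w \<longrightarrow> z \<in> PhiN N" using common_N by blast
  have "ok (PhiN N) w" using okw(1) N unfolding ok_def by blast
  then have "w \<in> PhiN (Suc N)" using okw by (simp add: Lam_char)
  then show ?case by blast
qed

lemma Phi_RW: "Phi = (RW :: 'x atom list set)"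
proof
  show "Phi \<subseteq> (RW :: 'x atom list set)" unfolding Phi_def using PhiN_sub by blast
  show "(RW :: 'x atom list set) \<subseteq> Phi"
  proof
    fix w :: "'x atom list" assume "w \<in> RW"
    then obtain n where "w \<in> PhiN n" using RW_sub by blast
    then show "w \<in> Phi" by (auto simp: Phi_def)
  qed
qed



lemma args_one[simp]: "args [Pw z] = [z]"
  by (simp add: args_def)
lemma args_two[simp]: "args [Pw x, Pw y] = [x, y]"
  by (simp add: args_def split: prod.split)

lemma not_wlt_two_one: "\<not> wlt [Pw x, Pw y] [Pw z]"
proof
  assume "wlt [Pw x, Pw y] [Pw z]"
  then show False by (cases rule: wlt.cases) auto
qed

lemma wlt_one_two: "wlt [Pw z] [Pw x, Pw y]"
  by (rule wlt.by_t) simp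

lemma lead_RB:
  fixes lam :: "'a::comm_ring_1"
  shows "lead (RB lam x y) = [Pw x, Pw y]"
proof -
  let ?A = "[Pw x, Pw y]"
  let ?S1 = "Poly_Mapping.single ?A (1::'a)"
  let ?S2 = "Poly_Mapping.single [Pw (Pw x # y)] (1::'a)"
  let ?S3 = "Poly_Mapping.single [Pw (x @ [Pw y])] (1::'a)"
  let ?S4 = "Poly_Mapping.single [Pw (x @ y)] lam"
  have r: "RB lam x y = ?S1 - ?S2 - ?S3 - ?S4" by (simp add: RB_def Pword_def)
  have k1: "Poly_Mapping.keys (?S1 - ?S2 - ?S3 - ?S4) \<subseteq> Poly_Mapping.keys (?S1 - ?S2 - ?S3) \<union> Poly_Mapping.keys ?S4"
    by (rule keys_diff)
  have k2: "Poly_Mapping.keys (?S1 - ?S2 - ?S3) \<subseteq> Poly_Mapping.keys (?S1 - ?S2) \<union> Poly_Mapping.keys ?S3"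
    by (rule keys_diff)
  have k3: "Poly_Mapping.keys (?S1 - ?S2) \<subseteq> Poly_Mapping.keys ?S1 \<union> Poly_Mapping.keys ?S2"
    by (rule keys_diff)
  have k4: "Poly_Mapping.keys ?S1 \<subseteq> {?A}" "Poly_Mapping.keys ?S2 \<subseteq> {[Pw (Pw x # y)]}"
    "Poly_Mapping.keys ?S3 \<subseteq> {[Pw (x @ [Pw y])]}" "Poly_Mapping.keys ?S4 \<subseteq> {[Pw (x @ y)]}"
    by simp_all
  have ks: "Poly_Mapping.keys (RB lam x y) \<subseteq> {?A, [Pw (Pw x # y)], [Pw (x @ [Pw y])], [Pw (x @ y)]}"
    unfolding r using k1 k2 k3 k4 by blast
  have "Poly_Mapping.lookup (RB lam x y) ?A = 1"
    by (simp add: RB_def Pword_def lookup_minus lookup_single)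
  then have inA: "?A \<in> Poly_Mapping.keys (RB lam x y)" by (simp add: in_keys_iff)
  have P: "?A \<in> Poly_Mapping.keys (RB lam x y) \<and> (\<forall>v\<in>Poly_Mapping.keys (RB lam x y). v \<noteq> ?A \<longrightarrow> wlt v ?A)"
  proof (intro conjI ballI impI)
    show "?A \<in> Poly_Mapping.keys (RB lam x y)" by (rule inA)
    fix v assume "v \<in> Poly_Mapping.keys (RB lam x y)" "v \<noteq> ?A"
    then have "v \<in> {[Pw (Pw x # y)], [Pw (x @ [Pw y])], [Pw (x @ y)]}" using ks by blast
    then show "wlt v ?A" using wlt_one_two by auto
  qed
  show ?thesis unfolding lead_def
  proof (rule the_equality)
    show "?A \<in> Poly_Mapping.keys (RB lam x y) \<and> (\<forall>v\<in>Poly_Mapping.keys (RB lam x y). v \<noteq> ?A \<longrightarrow> wlt v ?A)"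
      by (rule P)
  next
    fix w assume w: "w \<in> Poly_Mapping.keys (RB lam x y) \<and> (\<forall>v\<in>Poly_Mapping.keys (RB lam x y). v \<noteq> w \<longrightarrow> wlt v w)"
    show "w = ?A"
    proof (rule ccontr)
      assume ne: "w \<noteq> ?A"
      from w have "\<forall>v\<in>Poly_Mapping.keys (RB lam x y). v \<noteq> w \<longrightarrow> wlt v w" by simp
      then have wA: "wlt ?A w" using inA ne by auto
      have "w \<in> {[Pw (Pw x # y)], [Pw (x @ [Pw y])], [Pw (x @ y)]}"
        using w ks ne by blast
      then obtain z where "w = [Pw z]" by auto
      then show False using wA not_wlt_two_one[of x y z] by simp
    qed
  qed
qed

lemma nppl_append: "nppl (u @ v) \<Longrightarrow> nppl u \<and> nppl v"
proof (induction u)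
  case Nil then show ?case by simp
next
  case (Cons a u)
  then show ?case by (cases "u = []") (auto simp: startsP_append)
qed

lemma sub_not_nppl:
  fixes b :: "'x option atom" and u :: "'x option atom list"
  shows "nstar_a b = 1 \<Longrightarrow> \<not> nppl (sub_a [Pw x, Pw y] b)"
    and "nstar_l u = 1 \<Longrightarrow> \<not> nppl (sub_w [Pw x, Pw y] u)"
proof (induction b and u rule: nstar_a_nstar_l.induct)
  case (5 a u)
  then show ?case using nppl_append by (cases "nstar_a a = 1") auto
qed auto

lemma not_nppl_sub:
  fixes a :: "'x atom" and u :: "'x atom list"
  shows "wfa a \<Longrightarrow> \<not> nppa a \<Longrightarrow> \<exists>b x y. wfa b \<and> nstar_a b = 1 \<and> x \<in> Words \<and> y \<in> Words \<and> sub_a [Pw x, Pw y] b = [a]"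
    and "wfl u \<Longrightarrow> \<not> nppl u \<Longrightarrow> \<exists>u' x y. u' \<noteq> [] \<and> wfl u' \<and> nstar_l u' = 1 \<and> x \<in> Words \<and> y \<in> Words \<and> sub_w [Pw x, Pw y] u' = u"
proof (induction a and u rule: wfa_wfl.induct)
  case (1 x)
  then show ?case by simp
next
  case (2 v)
  then obtain u' x y where h: "u' \<noteq> []" "wfl u'" "nstar_l u' = 1" "x \<in> Words" "y \<in> Words" "sub_w [Pw x, Pw y] u' = v"
    by auto
  then show ?case by (intro exI[of _ "Pw u'"] exI[of _ x] exI[of _ y]) auto
next
  case 3
  then show ?case by simp
next
  case (4 a u)
  have wa: "wfa a" "wfl u" using 4 by auto
  show ?case
  proof (cases "nppa a")
    case False
    then obtain b x y where h: "wfa b" "nstar_a b = 1" "x \<in> Words" "y \<in> Words" "sub_a [Pw x, Pw y] b = [a]"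
      using 4 wa by blast
    then show ?thesis using wa
      by (intro exI[of _ "b # map (map_atom Some) u"] exI[of _ x] exI[of _ y]) (auto simp: emb_props)
  next
    case na: True
    show ?thesis
    proof (cases "nppl u")
      case False
      then obtain u' x y where h: "u' \<noteq> []" "wfl u'" "nstar_l u' = 1" "x \<in> Words" "y \<in> Words" "sub_w [Pw x, Pw y] u' = u"
        using 4 wa by blast
      then show ?thesis using wa
        by (intro exI[of _ "map_atom Some a # u'"] exI[of _ x] exI[of _ y]) (auto simp: emb_props)
    next
      case True
      then have "isPw a \<and> startsP u" using 4 na by auto
      then obtain x y r where a: "a = Pw x" "u = Pw y # r"
        by (metis isPw.elims(2) startsP.elims(2))
      have xy: "x \<in> Words" "y \<in> Words" "wfl r" using wa a by (auto simp: Words_def wfw_def)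
      then show ?thesis using a
        by (intro exI[of _ "Let None # map (map_atom Some) r"] exI[of _ x] exI[of _ y]) (auto simp: emb_props)
    qed
  qed
qed

lemma Irr_RBS:
  fixes lam :: "'k::comm_ring_1"
  shows "Irr (RBS lam) = (RW :: 'x::wellorder atom list set)"
proof
  show "Irr (RBS lam) \<subseteq> (RW :: 'x atom list set)"
  proof
    fix w :: "'x atom list" assume w: "w \<in> Irr (RBS lam)"
    then have ww: "w \<in> Words" by (simp add: Irr_def)
    have "nppl w"
    proof (rule ccontr)
      assume "\<not> nppl w"
      then obtain u' x y where h: "u' \<noteq> []" "wfl u'" "nstar_l u' = 1" "x \<in> Words" "y \<in> Words" "sub_w [Pw x, Pw y] u' = w"
        using not_nppl_sub(2)[of w] ww by (auto simp: Words_def wfw_def)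
      have "u' \<in> StarWords" using h by (simp add: StarWords_def wfw_def)
      moreover have "RB lam x y \<in> RBS lam" using h by (auto simp: RBS_def)
      ultimately have "w \<noteq> sub_w (lead (RB lam x y)) u'" using w by (simp add: Irr_def)
      then show False using h by (simp add: lead_RB)
    qed
    then show "w \<in> RW" using ww by (simp add: RW_def Words_def)
  qed
next
  show "(RW :: 'x atom list set) \<subseteq> Irr (RBS lam)"
  proof
    fix w :: "'x atom list" assume w: "w \<in> RW"
    show "w \<in> Irr (RBS lam)" unfolding Irr_def
    proof (intro CollectI conjI ballI)
      show "w \<in> Words" using w by (simp add: RW_def Words_def)
      fix u :: "'x option atom list" and s :: "('x, 'k) opoly" assume u: "u \<in> StarWords" and s: "s \<in> RBS lam"
      then obtain x y where "s = RB lam x y" by (auto simp: RBS_def)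
      then show "w \<noteq> sub_w (lead s) u"
        using sub_not_nppl(2)[of u x y] u w by (auto simp: lead_RB StarWords_def RW_def)
    qed
  qed
qed

theorem theorem4p3:
  fixes lam :: "'k::comm_ring_1"
  shows "Irr (RBS lam :: ('x::wellorder, 'k) opoly set) = Phi
    \<and> (\<forall>p\<in>(KXP :: ('x, 'k) opoly set). \<exists>q. Poly_Mapping.keys q \<subseteq> Phi \<and> p - q \<in> Idl (RBS lam))
    \<and> (\<forall>q :: ('x, 'k) opoly. Poly_Mapping.keys q \<subseteq> Phi \<and> q \<in> Idl (RBS lam) \<longrightarrow> q = 0)"
proof (intro conjI ballI allI impI)
  show "Irr (RBS lam :: ('x, 'k) opoly set) = Phi" by (simp add: Irr_RBS Phi_RW)
next
  fix p :: "('x, 'k) opoly" assume p: "p \<in> KXP"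
  then have pw: "\<And>w. w \<in> Poly_Mapping.keys p \<Longrightarrow> w \<in> Words" by (auto simp: KXP_def)
  define q where "q = ext (\<lambda>w. NFl lam w []) p"
  have "Poly_Mapping.keys q \<subseteq> Phi"
  proof
    fix k assume "k \<in> Poly_Mapping.keys q"
    then obtain w where w: "w \<in> Poly_Mapping.keys p" "k \<in> Poly_Mapping.keys (NFl lam w [])"
      using keys_ext[of "\<lambda>w. NFl lam w []" p] unfolding q_def by blast
    have "w \<noteq> []" "wfl w" using pw[OF w(1)] by (auto simp: Words_def wfw_def)
    then have "k \<noteq> [] \<and> wfl k \<and> nppl k" using NF_good(2)[of w lam, rule_format, of "[]" k] w(2) by simp
    then show "k \<in> Phi" by (simp add: Phi_RW RW_def wfw_def)
  qed
  moreover have "p - q \<in> Idl (RBS lam)"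
  proof -
    have "p - q = ext (\<lambda>w. Poly_Mapping.single w 1 - NFl lam w []) p"
      by (simp add: q_def ext_fdiff)
    also have "\<dots> \<in> Idl (RBS lam)"
    proof (rule idl_ext)
      fix w assume "w \<in> Poly_Mapping.keys p"
      then have "wfl w" using pw by (auto simp: Words_def wfw_def)
      then show "Poly_Mapping.single w 1 - NFl lam w [] \<in> Idl (RBS lam)"
        using span_NF(2)[of w lam, rule_format, of "[]"] by simp
    qed
    finally show ?thesis .
  qed
  ultimately show "\<exists>q. Poly_Mapping.keys q \<subseteq> Phi \<and> p - q \<in> Idl (RBS lam)" by blast
next
  fix q :: "('x, 'k) opoly"
  assume h: "Poly_Mapping.keys q \<subseteq> Phi \<and> q \<in> Idl (RBS lam)"
  have "ext (\<lambda>w. NFl lam w []) q = q"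
    using h by (intro NF_fix) (auto simp: Phi_RW RW_def)
  moreover have "ext (\<lambda>w. NFl lam w []) q = 0"
    using h idl_NF_zero by blast
  ultimately show "q = 0" by simp
qed



end
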